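(* For every integer $n\ge0$ and every sequence $s\neq(0)$ of non-negative integers with finitely many nonzero terms, setting $\alpha=[s]$, $$B^n_s=\sum_{J=(j_1,\dots,j_\alpha)\in\mathcal A^0_s}\ \sum_{1\le l_1<l_2<\dots<l_{\alpha-1}<l_\alpha:=n}\ \{l_1\}\prod_{a=2}^{\alpha}\{s^J_{a-1},l_a,j_a\},$$ i.e. in nested form $B^n_s=\sum_{J\in\mathcal A^0_s}\{s^J_{\alpha-1},n,j_\alpha\}\sum_{l_{\alpha-1}=\alpha-1}^{n-1}\{s^J_{\alpha-2},l_{\alpha-1},j_{\alpha-1}\}\cdots\sum_{l_2=2}^{l_3-1}\{s^J_1,l_2,j_2\}\sum_{l_1=1}^{l_2-1}\{l_1\}$ (for $\alpha=1$ the summand is just $\{s^J_0,n,j_1\}$).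
   Context: Fix real numbers $\tilde c_0,A_1,w$ and set $\tilde c_j=\tilde c_0-jA_1$ for all integers $j$. Sequences $s=(s_0,s_1,\dots)$ are integer sequences with finitely many nonzero terms; $(0)$ is the zero sequence; $|s|=\sum_i s_i$, $[s]=\sum_i s_i(i+1)$; $\sigma_0=(1,0,0,\dots)$, and for $i\ge1$, $\sigma_i$ has $-1$ at position $i-1$, $+1$ at position $i$, $0$ elsewhere. For $n\ge0$ and $s$ with non-negative entries, $B^n_s$ is defined by induction on $n+[s]$: $B^0_{(0)}=1$, and otherwise $B^n_s=(1-\delta_{s_0,0})(n+|s|-1)(\tilde c_{n+|s|-2}-w)\sum_{l=0}^{n-1}B^l_{s-\sigma_0}+\sum_{i\ge1}(1-\delta_{s_i,0})(s_{i-1}+1)\sum_{l=0}^{n-1}B^l_{s-\sigma_i}$ (empty sums vanish). For an integer $n$, $\{n\}=n(\tilde c_{n-1}-w)$; for a sequence $s$ and integers $l,a$, $\{s,l,a\}=\{l+|s|\}$ if $a=0$ and $\{s,l,a\}=s_{a-1}$ if $a\neq0$. $\mathcal A$ is the set of finite sequences $J=(j_1,\dots,j_\alpha)$ of non-negative integers with $j_1=0$, $|J|=\alpha$; $s^J_a=\sum_{a'=1}^a\sigma_{j_{a'}}$ ($s^J_0=(0)$), $s^J=s^J_{|J|}$. $\mathcal A^0\subset\mathcal A$ consists of those $J$ for which all entries of all $s^J_a$, $1\le a\le|J|$, are non-negative; $\mathcal A^0_s=\{J\in\mathcal A^0:s^J=s\}$ (such $J$ have $|J|=[s]$). *)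

theory Defs
  imports Complex_Main
begin

text \<open>Sequences are functions nat => int (finite support is assumed where needed).
  Parameters c0 (= tilde c_0), A1, w are explicit real arguments.\<close>

definition ct :: "real \<Rightarrow> real \<Rightarrow> int \<Rightarrow> real" where
  "ct c0 A1 j = c0 - of_int j * A1"

definition br :: "real \<Rightarrow> real \<Rightarrow> real \<Rightarrow> int \<Rightarrow> real" where
  "br c0 A1 w n = of_int n * (ct c0 A1 (n - 1) - w)"

definition sabs :: "(nat \<Rightarrow> int) \<Rightarrow> int" where
  "sabs s = (\<Sum>i\<in>{i. s i \<noteq> 0}. s i)"

definition sweight :: "(nat \<Rightarrow> int) \<Rightarrow> int" where
  "sweight s = (\<Sum>i\<in>{i. s i \<noteq> 0}. s i * (int i + 1))"

fun sigma :: "nat \<Rightarrow> nat \<Rightarrow> int" where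
  "sigma 0 = (\<lambda>k. if k = 0 then 1 else 0)"
| "sigma (Suc i) = (\<lambda>k. if k = Suc i then 1 else if k = i then -1 else 0)"

definition brace3 :: "real \<Rightarrow> real \<Rightarrow> real \<Rightarrow> (nat \<Rightarrow> int) \<Rightarrow> int \<Rightarrow> nat \<Rightarrow> real" where
  "brace3 c0 A1 w s l a = (if a = 0 then br c0 A1 w (l + sabs s) else of_int (s (a - 1)))"

text \<open>s^J = sum of sigma_(j_a); s^J_a = sJ (take a J).\<close>
definition sJ :: "nat list \<Rightarrow> nat \<Rightarrow> int" where
  "sJ J = (\<lambda>k. (\<Sum>x\<leftarrow>J. sigma x k))"

definition calA :: "nat list set" where
  "calA = {J. J \<noteq> [] \<and> hd J = 0}"

definition calA0 :: "nat list set" where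
  "calA0 = {J \<in> calA. \<forall>a\<in>{1..length J}. \<forall>k. sJ (take a J) k \<ge> 0}"

definition calA0s :: "(nat \<Rightarrow> int) \<Rightarrow> nat list set" where
  "calA0s s = {J \<in> calA0. sJ J = s}"

fun Bfun :: "real \<Rightarrow> real \<Rightarrow> real \<Rightarrow> nat \<Rightarrow> (nat \<Rightarrow> int) \<Rightarrow> real" where
  "Bfun c0 A1 w 0 s = (if s = (\<lambda>_. 0) then 1 else 0)"
| "Bfun c0 A1 w (Suc m) s =
     (if s 0 \<noteq> 0 then of_int (int (Suc m) + sabs s - 1) * (ct c0 A1 (int (Suc m) + sabs s - 2) - w)
          * (\<Sum>l\<le>m. Bfun c0 A1 w l (s - sigma 0)) else 0)
     + (\<Sum>i\<in>{i. 1 \<le> i \<and> s i \<noteq> 0}. of_int (s (i - 1) + 1) * (\<Sum>l\<le>m. Bfun c0 A1 w l (s - sigma i)))"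

end

theory Submission
  imports Defs
begin


lemma sigma_supp: "sigma x k \<noteq> 0 \<Longrightarrow> k \<le> x"
  by (cases x) (auto split: if_splits)

lemma sigma_self: "sigma i i = 1"
  by (cases i) auto

lemma fin_sigma: "finite {k. sigma x k \<noteq> 0}"
  by (rule finite_subset[of _ "{..x}"]) (auto dest: sigma_supp)

lemma sabs_on: assumes "finite A" "{i. s i \<noteq> 0} \<subseteq> A" shows "sabs s = (\<Sum>i\<in>A. s i)"
  unfolding sabs_def using assms by (intro sum.mono_neutral_left) auto

lemma sweight_on: assumes "finite A" "{i. s i \<noteq> 0} \<subseteq> A"
  shows "sweight s = (\<Sum>i\<in>A. s i * (int i + 1))"
  unfolding sweight_def using assms by (intro sum.mono_neutral_left) auto

lemma fin_add: "finite {i. f i \<noteq> 0} \<Longrightarrow> finite {i. g i \<noteq> (0::int)} \<Longrightarrow> finite {i. f i + g i \<noteq> 0}"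
  by (rule finite_subset[of _ "{i. f i \<noteq> 0} \<union> {i. g i \<noteq> 0}"]) auto

lemma fin_diff: "finite {i. f i \<noteq> 0} \<Longrightarrow> finite {i. g i \<noteq> (0::int)} \<Longrightarrow> finite {i. (f - g) i \<noteq> 0}"
  by (rule finite_subset[of _ "{i. f i \<noteq> 0} \<union> {i. g i \<noteq> 0}"]) auto

lemma sabs_add: assumes "finite {i. f i \<noteq> 0}" "finite {i. g i \<noteq> 0}"
  shows "sabs (\<lambda>k. f k + g k) = sabs f + sabs g"
proof -
  let ?A = "{i. f i \<noteq> 0} \<union> {i. g i \<noteq> 0}"
  have "sabs (\<lambda>k. f k + g k) = (\<Sum>i\<in>?A. f i + g i)" by (rule sabs_on) (use assms in auto)
  also have "\<dots> = (\<Sum>i\<in>?A. f i) + (\<Sum>i\<in>?A. g i)" by (rule sum.distrib)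
  also have "(\<Sum>i\<in>?A. f i) = sabs f" by (rule sabs_on[symmetric]) (use assms in auto)
  also have "(\<Sum>i\<in>?A. g i) = sabs g" by (rule sabs_on[symmetric]) (use assms in auto)
  finally show ?thesis .
qed

lemma sabs_diff: assumes "finite {i. f i \<noteq> 0}" "finite {i. g i \<noteq> 0}"
  shows "sabs (f - g) = sabs f - sabs g"
proof -
  let ?A = "{i. f i \<noteq> 0} \<union> {i. g i \<noteq> 0}"
  have "sabs (f - g) = (\<Sum>i\<in>?A. f i - g i)" by (subst sabs_on[of ?A]) (use assms in auto)
  also have "\<dots> = (\<Sum>i\<in>?A. f i) - (\<Sum>i\<in>?A. g i)" by (rule sum_subtractf)
  also have "(\<Sum>i\<in>?A. f i) = sabs f" by (rule sabs_on[symmetric]) (use assms in auto)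
  also have "(\<Sum>i\<in>?A. g i) = sabs g" by (rule sabs_on[symmetric]) (use assms in auto)
  finally show ?thesis .
qed

lemma sweight_add: assumes "finite {i. f i \<noteq> 0}" "finite {i. g i \<noteq> 0}"
  shows "sweight (\<lambda>k. f k + g k) = sweight f + sweight g"
proof -
  let ?A = "{i. f i \<noteq> 0} \<union> {i. g i \<noteq> 0}"
  have "sweight (\<lambda>k. f k + g k) = (\<Sum>i\<in>?A. f i * (int i + 1) + g i * (int i + 1))"
    by (subst sweight_on[of ?A]) (use assms in \<open>auto simp: algebra_simps\<close>)
  also have "\<dots> = (\<Sum>i\<in>?A. f i * (int i + 1)) + (\<Sum>i\<in>?A. g i * (int i + 1))" by (rule sum.distrib)
  also have "(\<Sum>i\<in>?A. f i * (int i + 1)) = sweight f" by (rule sweight_on[symmetric]) (use assms in auto)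
  also have "(\<Sum>i\<in>?A. g i * (int i + 1)) = sweight g" by (rule sweight_on[symmetric]) (use assms in auto)
  finally show ?thesis .
qed

lemma sweight_diff: assumes "finite {i. f i \<noteq> 0}" "finite {i. g i \<noteq> 0}"
  shows "sweight (f - g) = sweight f - sweight g"
proof -
  let ?A = "{i. f i \<noteq> 0} \<union> {i. g i \<noteq> 0}"
  have "sweight (f - g) = (\<Sum>i\<in>?A. f i * (int i + 1) - g i * (int i + 1))"
    by (subst sweight_on[of ?A]) (use assms in \<open>auto simp: algebra_simps\<close>)
  also have "\<dots> = (\<Sum>i\<in>?A. f i * (int i + 1)) - (\<Sum>i\<in>?A. g i * (int i + 1))" by (rule sum_subtractf)
  also have "(\<Sum>i\<in>?A. f i * (int i + 1)) = sweight f" by (rule sweight_on[symmetric]) (use assms in auto)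
  also have "(\<Sum>i\<in>?A. g i * (int i + 1)) = sweight g" by (rule sweight_on[symmetric]) (use assms in auto)
  finally show ?thesis .
qed

lemma sweight_sigma: "sweight (sigma x) = 1"
proof -
  have "sweight (sigma x) = (\<Sum>k\<le>x. sigma x k * (int k + 1))"
    by (rule sweight_on) (auto dest: sigma_supp)
  also have "\<dots> = 1"
  proof (cases x)
    case 0 then show ?thesis by simp
  next
    case (Suc y)
    have z: "(\<Sum>k<y. sigma x k * (int k + 1)) = 0" by (rule sum.neutral) (auto simp: Suc)
    show ?thesis using z by (simp add: Suc lessThan_Suc_atMost[symmetric])
  qed
  finally show ?thesis .
qed

lemma sabs_sigma0: "sabs (sigma 0) = 1"
proof -
  have "sabs (sigma 0) = (\<Sum>k\<le>0. sigma 0 k)" by (rule sabs_on) (auto dest: sigma_supp)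
  then show ?thesis by simp
qed

lemma sJ_Nil: "sJ [] = (\<lambda>_. 0)" by (simp add: sJ_def)
lemma sJ_Cons: "sJ (x # J) = (\<lambda>k. sigma x k + sJ J k)" by (simp add: sJ_def)
lemma sJ_snoc: "sJ (J @ [x]) = (\<lambda>k. sJ J k + sigma x k)" by (simp add: sJ_def)

lemma fin_sJ: "finite {k. sJ J k \<noteq> 0}"
  by (induction J) (auto simp: sJ_Nil sJ_Cons intro: fin_add fin_sigma)

lemma sweight_sJ: "sweight (sJ J) = int (length J)"
proof (induction J)
  case Nil then show ?case by (simp add: sJ_Nil sweight_def)
next
  case (Cons x J)
  then show ?case by (simp add: sJ_Cons sweight_add fin_sigma fin_sJ sweight_sigma)
qed


definition Fs :: "real \<Rightarrow> real \<Rightarrow> real \<Rightarrow> nat list \<Rightarrow> nat \<Rightarrow> real" where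
  "Fs c0 A1 w J n = (\<Sum>L\<in>{L. length L = length J - 1 \<and> sorted_wrt (<) L \<and> set L \<subseteq> {1..<n}}.
         br c0 A1 w (int ((L @ [n]) ! 0))
         * (\<Prod>a\<in>{2..length J}.
              brace3 c0 A1 w (sJ (take (a - 1) J)) (int ((L @ [n]) ! (a - 1))) (J ! (a - 1))))"

definition LS :: "nat \<Rightarrow> nat \<Rightarrow> nat list set" where
  "LS k n = {L. length L = k \<and> sorted_wrt (<) L \<and> set L \<subseteq> {1..<n}}"

lemma fin_LS: "finite (LS k n)"
  by (rule finite_subset[of _ "{L. set L \<subseteq> {1..<n} \<and> length L = k}"])
     (auto simp: LS_def intro: finite_lists_length_eq)

lemma Fs_0: "J \<noteq> [] \<Longrightarrow> Fs c0 A1 w J 0 = 0"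
  unfolding Fs_def by (rule sum.neutral) (auto simp: br_def)

lemma Fs_single: "Fs c0 A1 w [x] n = br c0 A1 w (int n)"
proof -
  have "{L. length L = length [x] - 1 \<and> sorted_wrt (<) L \<and> set L \<subseteq> {1..<n}} = {[]}" by auto
  then show ?thesis unfolding Fs_def by simp
qed

lemma LS_snoc:
  assumes "k \<ge> 1"
  shows "LS k n = (\<lambda>(l, L'). L' @ [l]) ` (SIGMA l:{1..<n}. LS (k - 1) l)"
proof (rule set_eqI, rule iffI)
  fix L assume L: "L \<in> LS k n"
  then have ne: "L \<noteq> []" using assms by (auto simp: LS_def)
  let ?L' = "butlast L" and ?l = "last L"
  have eq: "L = ?L' @ [?l]" using ne by simp
  have s: "sorted_wrt (<) (?L' @ [?l])" "set (?L' @ [?l]) \<subseteq> {1..<n}" "length (?L' @ [?l]) = k"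
    using L eq by (auto simp: LS_def)
  have "(?l, ?L') \<in> (SIGMA l:{1..<n}. LS (k - 1) l)"
    using s by (auto simp: LS_def sorted_wrt_append)
  then show "L \<in> (\<lambda>(l, L'). L' @ [l]) ` (SIGMA l:{1..<n}. LS (k - 1) l)"
    using eq by (metis (no_types, lifting) case_prod_conv image_eqI)
next
  fix L assume "L \<in> (\<lambda>(l, L'). L' @ [l]) ` (SIGMA l:{1..<n}. LS (k - 1) l)"
  then obtain l L' where L: "L = L' @ [l]" "l \<in> {1..<n}" "L' \<in> LS (k - 1) l" by auto
  then show "L \<in> LS k n" using assms
    by (auto simp: LS_def sorted_wrt_append)
qed

lemma inj_snoc: "inj_on (\<lambda>(l, L'). L' @ [l]) X"
  by (auto simp: inj_on_def)

lemma Fs_snoc: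
  assumes "J' \<noteq> []"
  shows "Fs c0 A1 w (J' @ [i]) n = brace3 c0 A1 w (sJ J') (int n) i * (\<Sum>l<n. Fs c0 A1 w J' l)"
proof -
  define k where "k = length J'"
  have k1: "k \<ge> 1" using assms by (simp add: k_def Suc_le_eq)
  define g where "g L = br c0 A1 w (int ((L @ [n]) ! 0))
         * (\<Prod>a\<in>{2..length (J' @ [i])}.
              brace3 c0 A1 w (sJ (take (a - 1) (J' @ [i]))) (int ((L @ [n]) ! (a - 1))) ((J' @ [i]) ! (a - 1)))" for L
  define h where "h l L = br c0 A1 w (int ((L @ [l]) ! 0))
         * (\<Prod>a\<in>{2..length J'}.
              brace3 c0 A1 w (sJ (take (a - 1) J')) (int ((L @ [l]) ! (a - 1))) (J' ! (a - 1)))" for l L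
  have FJ: "Fs c0 A1 w (J' @ [i]) n = sum g (LS k n)"
    unfolding Fs_def g_def LS_def k_def by simp
  have FJ': "Fs c0 A1 w J' l = sum (h l) (LS (k - 1) l)" for l
    unfolding Fs_def h_def LS_def k_def by simp
  have gh: "g (L' @ [l]) = brace3 c0 A1 w (sJ J') (int n) i * h l L'" if "L' \<in> LS (k - 1) l" for l L'
  proof -
    have len: "length L' = k - 1" using that by (simp add: LS_def)
    have len2: "length (J' @ [i]) = Suc k" by (simp add: k_def)
    have p: "(\<Prod>a\<in>{2..Suc k}. brace3 c0 A1 w (sJ (take (a - 1) (J' @ [i]))) (int ((L' @ [l] @ [n]) ! (a - 1))) ((J' @ [i]) ! (a - 1)))
       = (\<Prod>a\<in>{2..k}. brace3 c0 A1 w (sJ (take (a - 1) J')) (int ((L' @ [l]) ! (a - 1))) (J' ! (a - 1)))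
         * brace3 c0 A1 w (sJ J') (int n) i"
    proof -
      have "(\<Prod>a\<in>{2..Suc k}. brace3 c0 A1 w (sJ (take (a - 1) (J' @ [i]))) (int ((L' @ [l] @ [n]) ! (a - 1))) ((J' @ [i]) ! (a - 1)))
         = (\<Prod>a\<in>{2..k}. brace3 c0 A1 w (sJ (take (a - 1) (J' @ [i]))) (int ((L' @ [l] @ [n]) ! (a - 1))) ((J' @ [i]) ! (a - 1)))
           * brace3 c0 A1 w (sJ (take k (J' @ [i]))) (int ((L' @ [l] @ [n]) ! k)) ((J' @ [i]) ! k)"
        using k1 by (simp add: prod.cl_ivl_Suc)
      also have "brace3 c0 A1 w (sJ (take k (J' @ [i]))) (int ((L' @ [l] @ [n]) ! k)) ((J' @ [i]) ! k)
           = brace3 c0 A1 w (sJ J') (int n) i"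
        using len k1 by (auto simp: k_def nth_append)
      also have "(\<Prod>a\<in>{2..k}. brace3 c0 A1 w (sJ (take (a - 1) (J' @ [i]))) (int ((L' @ [l] @ [n]) ! (a - 1))) ((J' @ [i]) ! (a - 1)))
          = (\<Prod>a\<in>{2..k}. brace3 c0 A1 w (sJ (take (a - 1) J')) (int ((L' @ [l]) ! (a - 1))) (J' ! (a - 1)))"
      proof (rule prod.cong)
        fix a assume a: "a \<in> {2..k}"
        then have "a - 1 < k" by auto
        then show "brace3 c0 A1 w (sJ (take (a - 1) (J' @ [i]))) (int ((L' @ [l] @ [n]) ! (a - 1))) ((J' @ [i]) ! (a - 1))
          = brace3 c0 A1 w (sJ (take (a - 1) J')) (int ((L' @ [l]) ! (a - 1))) (J' ! (a - 1))"
          using len k1 by (simp add: k_def nth_append)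
      qed simp
      finally show ?thesis .
    qed
    have "(L' @ [l] @ [n]) ! 0 = (L' @ [l]) ! 0"
      by (cases L') auto
    then show ?thesis unfolding g_def h_def using p len2
      by (simp add: k_def mult_ac)
  qed
  have "sum g (LS k n) = (\<Sum>(l, L')\<in>(SIGMA l:{1..<n}. LS (k - 1) l). g (L' @ [l]))"
    by (subst LS_snoc[OF k1], subst sum.reindex[OF inj_snoc]) (simp add: case_prod_beta comp_def)
  also have "\<dots> = (\<Sum>l\<in>{1..<n}. \<Sum>L'\<in>LS (k - 1) l. g (L' @ [l]))"
    by (rule sum.Sigma[symmetric]) (auto simp: fin_LS)
  also have "\<dots> = (\<Sum>l\<in>{1..<n}. brace3 c0 A1 w (sJ J') (int n) i * Fs c0 A1 w J' l)"
    by (rule sum.cong) (auto simp: FJ' gh sum_distrib_left)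
  also have "\<dots> = brace3 c0 A1 w (sJ J') (int n) i * (\<Sum>l\<in>{1..<n}. Fs c0 A1 w J' l)"
    by (simp add: sum_distrib_left)
  also have "(\<Sum>l\<in>{1..<n}. Fs c0 A1 w J' l) = (\<Sum>l<n. Fs c0 A1 w J' l)"
    by (rule sum.mono_neutral_left) (use assms in \<open>auto simp: Fs_0 not_less_eq_eq\<close>)
  finally show ?thesis using FJ by simp
qed


lemma calA0_nonneg: "J \<in> calA0 \<Longrightarrow> sJ J k \<ge> 0"
proof -
  assume J: "J \<in> calA0"
  then have "J \<noteq> []" by (auto simp: calA0_def calA_def)
  then have "length J \<in> {1..length J}" by (simp add: Suc_leI)
  then have "\<forall>k. sJ (take (length J) J) k \<ge> 0" using J unfolding calA0_def by blast
  then show ?thesis by simp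
qed

lemma calA0s_snoc_iff:
  assumes "J' \<noteq> []"
  shows "J' @ [i] \<in> calA0s s \<longleftrightarrow> J' \<in> calA0s (s - sigma i) \<and> (\<forall>k. s k \<ge> 0)"
proof -
  let ?P = "\<lambda>J. \<forall>k. sJ J k \<ge> 0"
  have A: "J' @ [i] \<in> calA \<longleftrightarrow> J' \<in> calA" using assms by (simp add: calA_def)
  have pre: "(\<forall>a\<in>{1..length (J' @ [i])}. ?P (take a (J' @ [i]))) \<longleftrightarrow>
      (\<forall>a\<in>{1..length J'}. ?P (take a J')) \<and> ?P (J' @ [i])"
  proof -
    have "{1..length (J' @ [i])} = {1..length J'} \<union> {Suc (length J')}" by auto
    moreover have "\<forall>a\<in>{1..length J'}. take a (J' @ [i]) = take a J'" by auto
    ultimately show ?thesis by auto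
  qed
  have e: "sJ (J' @ [i]) = s \<longleftrightarrow> sJ J' = s - sigma i"
    by (auto simp: sJ_snoc fun_eq_iff algebra_simps)
  show ?thesis
    unfolding calA0s_def calA0_def using A pre e by auto
qed

lemma sJ_single: "sJ [x] = sigma x" by (simp add: sJ_def)

lemma calA0s_decomp:
  assumes nn: "\<forall>k. s k \<ge> 0" and ns: "s \<noteq> sigma 0"
  shows "calA0s s = (\<Union>i\<in>{i. s i \<noteq> 0}. (\<lambda>J'. J' @ [i]) ` calA0s (s - sigma i))"
proof (rule set_eqI, rule iffI)
  fix J assume J: "J \<in> calA0s s"
  then have ne: "J \<noteq> []" by (auto simp: calA0s_def calA0_def calA_def)
  define J' where "J' = butlast J"
  define i where "i = last J"
  have eq: "J = J' @ [i]" using ne by (simp add: J'_def i_def)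
  have ne': "J' \<noteq> []"
  proof
    assume "J' = []"
    then have "J = [i]" using eq by simp
    moreover then have "i = 0" using J by (auto simp: calA0s_def calA0_def calA_def)
    ultimately have "s = sigma 0" using J by (auto simp: calA0s_def sJ_single)
    then show False using ns by simp
  qed
  have J'in: "J' \<in> calA0s (s - sigma i)" using calA0s_snoc_iff[OF ne'] J eq by auto
  have "sJ J' i \<ge> 0" using J'in by (intro calA0_nonneg) (auto simp: calA0s_def)
  moreover have "sJ J' i = s i - 1" using J'in by (auto simp: calA0s_def sigma_self)
  ultimately have "s i \<noteq> 0" by simp
  then show "J \<in> (\<Union>i\<in>{i. s i \<noteq> 0}. (\<lambda>J'. J' @ [i]) ` calA0s (s - sigma i))"
    using J'in eq by auto
next
  fix J assume "J \<in> (\<Union>i\<in>{i. s i \<noteq> 0}. (\<lambda>J'. J' @ [i]) ` calA0s (s - sigma i))"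
  then obtain i J' where J: "J = J' @ [i]" "J' \<in> calA0s (s - sigma i)" by auto
  then have "J' \<noteq> []" by (auto simp: calA0s_def calA0_def calA_def)
  then show "J \<in> calA0s s" using calA0s_snoc_iff J nn by auto
qed

lemma len_calA0s: "J \<in> calA0s s \<Longrightarrow> length J = nat (sweight s)"
  unfolding calA0s_def using sweight_sJ by (metis (mono_tags, lifting) mem_Collect_eq nat_int)

lemma calA0s_sigma0: "calA0s (sigma 0) = {[0]}"
proof (rule set_eqI, rule iffI)
  fix J assume J: "J \<in> calA0s (sigma 0)"
  then have "length J = 1" using len_calA0s[OF J] sweight_sigma[of 0] by simp
  moreover have "hd J = 0" using J by (auto simp: calA0s_def calA0_def calA_def)
  ultimately show "J \<in> {[0::nat]}"
    by (metis One_nat_def length_0_conv length_Suc_conv list.sel(1) singleton_iff)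
next
  fix J :: "nat list" assume "J \<in> {[0]}"
  then show "J \<in> calA0s (sigma 0)"
    by (auto simp: calA0s_def calA0_def calA_def sJ_single)
qed

lemma calA0s_zero: "calA0s (\<lambda>_. 0) = {}"
proof -
  have "sweight (\<lambda>_. 0) = 0" by (simp add: sweight_def)
  then show ?thesis using len_calA0s by (fastforce simp: calA0s_def calA0_def calA_def)
qed

lemma sigma_nonneg_diff:
  assumes "\<forall>k. s k \<ge> 0" "s i \<noteq> 0" shows "\<forall>k. (s - sigma i) k \<ge> 0"
proof
  fix k
  have "s i \<ge> 1" using assms using assms(1)[rule_format, of i] by arith
  then show "(s - sigma i) k \<ge> 0" using assms(1)[rule_format, of k]
    by (cases i) (auto split: if_splits)
qed

lemma fin_calA0s_aux:
  "finite {i. s i \<noteq> 0} \<Longrightarrow> \<forall>k. s k \<ge> 0 \<Longrightarrow> nat (sweight s) = N \<Longrightarrow> finite (calA0s s)"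
proof (induction N arbitrary: s rule: less_induct)
  case (less N)
  show ?case
  proof (cases "s = (\<lambda>_. 0)")
    case True then show ?thesis by (simp add: calA0s_zero)
  next
    case False
    show ?thesis
    proof (cases "s = sigma 0")
      case True then show ?thesis unfolding True calA0s_sigma0 by simp
    next
      case ns: False
      have "finite (calA0s (s - sigma i))" if i: "s i \<noteq> 0" for i
      proof -
        have w: "sweight (s - sigma i) = sweight s - 1"
          using less.prems by (simp add: sweight_diff fin_sigma sweight_sigma)
        have "sweight s \<ge> 1"
        proof -
          have "sweight s = (\<Sum>k\<in>{k. s k \<noteq> 0}. s k * (int k + 1))" by (simp add: sweight_def)
          moreover have "(\<Sum>k\<in>{k. s k \<noteq> 0}. s k * (int k + 1)) \<ge> s i * (int i + 1)"
            by (rule member_le_sum) (use i less.prems in \<open>auto\<close>)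
          moreover have "s i * (int i + 1) \<ge> 1"
            using i less.prems(2) by (smt (verit) mult_le_cancel_left1 of_nat_0_le_iff)
          ultimately show ?thesis by simp
        qed
        then have "nat (sweight (s - sigma i)) < N" using w less.prems by simp
        then show ?thesis
          using less.IH less.prems sigma_nonneg_diff[OF less.prems(2) i] fin_diff fin_sigma by blast
      qed
      then show ?thesis
        using calA0s_decomp[OF less.prems(2) ns] less.prems(1) by auto
    qed
  qed
qed

lemma fin_calA0s: "finite {i. s i \<noteq> 0} \<Longrightarrow> \<forall>k. s k \<ge> 0 \<Longrightarrow> finite (calA0s s)"
  using fin_calA0s_aux by blast


lemma Bfun_zero_s: "Bfun c0 A1 w l (\<lambda>_. 0) = (if l = 0 then 1 else 0)"
  by (cases l) auto

lemma sum_Bfun_zero: "(\<Sum>l\<le>m. Bfun c0 A1 w l (\<lambda>_. 0)) = 1"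
proof -
  have "(\<Sum>l\<le>m. Bfun c0 A1 w l (\<lambda>_. 0)) = (\<Sum>l\<le>m. if l = 0 then 1 else 0)"
    by (simp add: Bfun_zero_s)
  also have "\<dots> = 1" by (simp add: sum.delta)
  finally show ?thesis .
qed

lemma main:
  "finite {i. s i \<noteq> 0} \<Longrightarrow> \<forall>i. s i \<ge> 0 \<Longrightarrow> s \<noteq> (\<lambda>_. 0) \<Longrightarrow>
   Bfun c0 A1 w n s = (\<Sum>J\<in>calA0s s. Fs c0 A1 w J n)"
proof (induction n arbitrary: s rule: less_induct)
  case (less n)
  note fin = less.prems(1) and nn = less.prems(2) and nz = less.prems(3)
  show ?case
  proof (cases n)
    case 0
    have "(\<Sum>J\<in>calA0s s. Fs c0 A1 w J n) = 0"
      by (rule sum.neutral) (auto simp: 0 Fs_0 calA0s_def calA0_def calA_def)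
    then show ?thesis using nz by (simp add: 0)
  next
    case (Suc m)
    show ?thesis
    proof (cases "s = sigma 0")
      case True
      have e: "{i. Suc 0 \<le> i \<and> sigma 0 i \<noteq> 0} = {}" by auto
      have "sigma 0 - sigma 0 = (\<lambda>_. 0::int)" by (simp add: fun_eq_iff)
      then have "Bfun c0 A1 w (Suc m) (sigma 0) = of_int (int (Suc m)) * (ct c0 A1 (int m) - w)"
        using sum_Bfun_zero[of c0 A1 w m] sabs_sigma0
        by (simp only: Bfun.simps) (simp del: sigma.simps add: sigma_self e)
      then show ?thesis unfolding True calA0s_sigma0 Suc
        by (simp add: Fs_single br_def)
    next
      case ns: False
      define supp where "supp = {i. s i \<noteq> 0}"
      define coef where "coef i = (if i = 0 then of_int (int (Suc m) + sabs s - 1) * (ct c0 A1 (int (Suc m) + sabs s - 2) - w) else of_int (s (i-1) + 1))" for i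
      have finsupp: "finite supp" using fin by (simp add: supp_def)
      have B: "Bfun c0 A1 w (Suc m) s = (\<Sum>i\<in>supp. coef i * (\<Sum>l\<le>m. Bfun c0 A1 w l (s - sigma i)))"
      proof -
        have u: "supp = {i. i = 0 \<and> s 0 \<noteq> 0} \<union> {i. 1 \<le> i \<and> s i \<noteq> 0}" by (auto simp: supp_def not_less_eq_eq)
        have "(\<Sum>i\<in>supp. coef i * (\<Sum>l\<le>m. Bfun c0 A1 w l (s - sigma i)))
           = (\<Sum>i\<in>{i. i = 0 \<and> s 0 \<noteq> 0}. coef i * (\<Sum>l\<le>m. Bfun c0 A1 w l (s - sigma i)))
           + (\<Sum>i\<in>{i. 1 \<le> i \<and> s i \<noteq> 0}. coef i * (\<Sum>l\<le>m. Bfun c0 A1 w l (s - sigma i)))"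
          unfolding u by (rule sum.union_disjoint) (use finsupp u in auto)
        also have "(\<Sum>i\<in>{i. 1 \<le> i \<and> s i \<noteq> 0}. coef i * (\<Sum>l\<le>m. Bfun c0 A1 w l (s - sigma i)))
           = (\<Sum>i\<in>{i. 1 \<le> i \<and> s i \<noteq> 0}. of_int (s (i - 1) + 1) * (\<Sum>l\<le>m. Bfun c0 A1 w l (s - sigma i)))"
          by (rule sum.cong) (auto simp: coef_def)
        also have "(\<Sum>i\<in>{i. i = 0 \<and> s 0 \<noteq> 0}. coef i * (\<Sum>l\<le>m. Bfun c0 A1 w l (s - sigma i)))
           = (if s 0 \<noteq> 0 then of_int (int (Suc m) + sabs s - 1) * (ct c0 A1 (int (Suc m) + sabs s - 2) - w)
          * (\<Sum>l\<le>m. Bfun c0 A1 w l (s - sigma 0)) else 0)"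
        proof (cases "s 0 = 0")
          case True then show ?thesis by simp
        next
          case False
          then have "{i. i = 0 \<and> s 0 \<noteq> 0} = {0}" by auto
          then show ?thesis using False by (simp add: coef_def)
        qed
        finally show ?thesis by (simp only: Bfun.simps)
      qed
      have sub: "\<forall>k. (s - sigma i) k \<ge> 0" "finite {k. (s - sigma i) k \<noteq> 0}" "s - sigma i \<noteq> (\<lambda>_. 0)"
        if i: "i \<in> supp" for i
      proof -
        show "\<forall>k. (s - sigma i) k \<ge> 0" using sigma_nonneg_diff nn i by (simp add: supp_def)
        show "finite {k. (s - sigma i) k \<noteq> 0}" using fin_diff[OF fin fin_sigma] .
        show "s - sigma i \<noteq> (\<lambda>_. 0)"
        proof
          assume h: "s - sigma i = (\<lambda>_. 0)"
          then have e: "s = sigma i" by (auto simp: fun_eq_iff)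
          show False
          proof (cases i)
            case 0 then show False using e ns by simp
          next
            case (Suc j)
            have "s j = -1" using e Suc by simp
            then show False using nn by (metis neg_0_le_iff_le not_one_le_zero)
          qed
        qed
      qed
      have IH: "Bfun c0 A1 w l (s - sigma i) = (\<Sum>J'\<in>calA0s (s - sigma i). Fs c0 A1 w J' l)"
        if "i \<in> supp" "l \<le> m" for i l
      proof -
        have "l < n" using that(2) Suc by simp
        then show ?thesis using less.IH[of l "s - sigma i"] sub[OF that(1)] by blast
      qed
      have coefeq: "coef i = brace3 c0 A1 w (sJ J') (int (Suc m)) i"
        if "i \<in> supp" "J' \<in> calA0s (s - sigma i)" for i J'
      proof -
        have sj: "sJ J' = s - sigma i" using that(2) by (simp add: calA0s_def)
        show ?thesis
        proof (cases i)
          case 0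
          have h: "sabs (s - sigma 0) = sabs s - 1"
            using sabs_diff[OF fin fin_sigma[of 0]] sabs_sigma0 by simp
          have b: "brace3 c0 A1 w (sJ J') (int (Suc m)) i = br c0 A1 w (int (Suc m) + sabs s - 1)"
            using 0 sj h by (simp add: brace3_def del: sigma.simps)
          have "int (Suc m) + sabs s - 1 - 1 = int (Suc m) + sabs s - 2" by simp
          then show ?thesis unfolding b using 0 by (simp only: coef_def br_def if_True refl simp_thms)
        next
          case (Suc j)
          then show ?thesis using sj by (simp add: brace3_def coef_def)
        qed
      qed
      have ne: "J' \<noteq> []" if "J' \<in> calA0s X" for J' X
        using that by (auto simp: calA0s_def calA0_def calA_def)
      have finA: "finite (calA0s (s - sigma i))" if "i \<in> supp" for i
        using fin_calA0s sub[OF that] by blast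
      have "Bfun c0 A1 w (Suc m) s = (\<Sum>i\<in>supp. coef i * (\<Sum>l\<le>m. \<Sum>J'\<in>calA0s (s - sigma i). Fs c0 A1 w J' l))"
        unfolding B by (rule sum.cong) (auto simp: IH)
      also have "\<dots> = (\<Sum>i\<in>supp. \<Sum>J'\<in>calA0s (s - sigma i). coef i * (\<Sum>l<Suc m. Fs c0 A1 w J' l))"
        by (rule sum.cong) (simp_all add: sum.swap[of _ "{..m}"] sum_distrib_left lessThan_Suc_atMost)
      also have "\<dots> = (\<Sum>i\<in>supp. \<Sum>J'\<in>calA0s (s - sigma i). Fs c0 A1 w (J' @ [i]) (Suc m))"
        by (intro sum.cong refl) (simp add: Fs_snoc[OF ne] coefeq)
      also have "\<dots> = (\<Sum>i\<in>supp. \<Sum>J\<in>(\<lambda>J'. J' @ [i]) ` calA0s (s - sigma i). Fs c0 A1 w J (Suc m))"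
        by (rule sum.cong[OF refl], subst sum.reindex) (auto simp: inj_on_def)
      also have "\<dots> = (\<Sum>J\<in>(\<Union>i\<in>supp. (\<lambda>J'. J' @ [i]) ` calA0s (s - sigma i)). Fs c0 A1 w J (Suc m))"
        by (rule sum.UNION_disjoint[symmetric]) (use finsupp finA in auto)
      also have "\<dots> = (\<Sum>J\<in>calA0s s. Fs c0 A1 w J (Suc m))"
        using calA0s_decomp[OF nn ns] by (simp add: supp_def)
      finally show ?thesis using Suc by simp
    qed
  qed
qed

theorem mainTheorem7:
  fixes c0 A1 w :: real and n :: nat and s :: "nat \<Rightarrow> int"
  assumes "finite {i. s i \<noteq> 0}" and "\<forall>i. s i \<ge> 0" and "s \<noteq> (\<lambda>_. 0)"
  shows "Bfun c0 A1 w n s =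
    (\<Sum>J\<in>calA0s s.
       \<Sum>L\<in>{L. length L = nat (sweight s) - 1 \<and> sorted_wrt (<) L \<and> set L \<subseteq> {1..<n}}.
         br c0 A1 w (int ((L @ [n]) ! 0))
         * (\<Prod>a\<in>{2..nat (sweight s)}.
              brace3 c0 A1 w (sJ (take (a - 1) J)) (int ((L @ [n]) ! (a - 1))) (J ! (a - 1))))"
proof -
  have "Bfun c0 A1 w n s = (\<Sum>J\<in>calA0s s. Fs c0 A1 w J n)"
    using main assms by blast
  also have "\<dots> = (\<Sum>J\<in>calA0s s.
       \<Sum>L\<in>{L. length L = nat (sweight s) - 1 \<and> sorted_wrt (<) L \<and> set L \<subseteq> {1..<n}}.
         br c0 A1 w (int ((L @ [n]) ! 0))
         * (\<Prod>a\<in>{2..nat (sweight s)}.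
              brace3 c0 A1 w (sJ (take (a - 1) J)) (int ((L @ [n]) ! (a - 1))) (J ! (a - 1))))"
  proof (rule sum.cong[OF refl])
    fix J assume "J \<in> calA0s s"
    then have e: "nat (sweight s) = length J" using len_calA0s by simp
    show "Fs c0 A1 w J n = (\<Sum>L\<in>{L. length L = nat (sweight s) - 1 \<and> sorted_wrt (<) L \<and> set L \<subseteq> {1..<n}}.
         br c0 A1 w (int ((L @ [n]) ! 0))
         * (\<Prod>a\<in>{2..nat (sweight s)}.
              brace3 c0 A1 w (sJ (take (a - 1) J)) (int ((L @ [n]) ! (a - 1))) (J ! (a - 1))))"
      unfolding e Fs_def ..
  qed
  finally show ?thesis .
qed

end
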